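(* Let $X,Y$ be $\mathfrak{Q}$-preordered $\mathfrak{Q}$-subsets and $g\colon\mathsf{P}^{\dagger}Y\to\mathsf{P}^{\dagger}X$ a $\mathfrak{Q}$-order-preserving map. The following are equivalent: (i) $g$ is a right adjoint in $\mathfrak{Q}\text{-}\mathbf{FOrd}$, i.e. there is a $\mathfrak{Q}$-order-preserving $f\colon\mathsf{P}^{\dagger}X\to\mathsf{P}^{\dagger}Y$ with $f\dashv g$ (a dual $\mathfrak{Q}$-axiality from $X$ to $Y$); (ii) $g$ is a right adjoint between the underlying preordered sets of $\mathsf{P}^{\dagger}Y$ and $\mathsf{P}^{\dagger}X$, and $g(\lambda\circ v)=g\lambda\circ v$ for all $\lambda\in\mathsf{P}^{\dagger}Y$, $q\in\mathfrak{Q}$ and $v\in\mathcal{D}\mathfrak{Q}(q,|\lambda|)$; (iii) $g$ is a right adjoint between the underlying preordered sets of $\mathsf{P}^{\dagger}Y$ and $\mathsf{P}^{\dagger}X$, and $g(\mathsf{y}^{\dagger}_Y y\circ v)=g\mathsf{y}^{\dagger}_Y y\circ v$ for all $y\in Y$, $q\in\mathfrak{Q}$ and $v\in\mathcal{D}\mathfrak{Q}(q,|y|)$.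
   Context: $(\mathfrak{Q},\&,e)$ is a non-trivial unital quantale (complete lattice with associative multiplication with unit $e$ preserving joins in each variable, $\bot<e$), implications $p\& q\le r\iff p\le r/ q\iff q\le p\backslash r$, and $\mathcal{D}\mathfrak{Q}(p,q)=\{u\mid (u/ p)\& p=u=q\&(q\backslash u)\}$. A $\mathfrak{Q}$-subset is a set $X$ with $|\cdot|\colon X\to\mathfrak{Q}$; $\mathbf{1}_q$ is the singleton $\{*\}$ with $|*|=q$, and $v\in\mathcal{D}\mathfrak{Q}(p,q)$ is identified with the $\mathfrak{Q}$-relation from $\mathbf{1}_p$ to $\mathbf{1}_q$ with value $v$. A $\mathfrak{Q}$-relation from $X$ to $Y$ is a map $\phi\colon X\times Y\to\mathfrak{Q}$ with $\phi(x,y)\in\mathcal{D}\mathfrak{Q}(|x|,|y|)$, ordered pointwise; composition $(\psi\circ\phi)(x,z)=\bigvee_y(\psi(y,z)/|y|)\&\phi(x,y)$; $\xi\swarrow\phi$ is the largest $\psi'$ with $\psi'\circ\phi\le\xi$, and $\psi\searrow\xi$ the largest $\phi'$ with $\psi\circ\phi'\le\xi$. $\mathrm{id}_X(x,x)=|x|$, $\bot$ elsewhere. A $\mathfrak{Q}$-preordered $\mathfrak{Q}$-subset is a $\mathfrak{Q}$-subset $X$ with a $\mathfrak{Q}$-relation $1_X^{\natural}$ from $X$ to $X$ with $\mathrm{id}_X\le 1_X^{\natural}$ and $1_X^{\natural}\circ 1_X^{\natural}\le 1_X^{\natural}$; its underlying preorder is $x\le y\iff |x|=|y|$ and $|x|\le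 1_X^{\natural}(x,y)$. A $\mathfrak{Q}$-order-preserving map $f$ satisfies $|fx|=|x|$ and $1_X^{\natural}(x,x')\le 1_Y^{\natural}(fx,fx')$; $f\le g$ means $|x|\le 1_Y^{\natural}(fx,gx)$ for all $x$; $f\dashv g$ means $1_X\le gf$ and $fg\le 1_Y$; $\mathfrak{Q}\text{-}\mathbf{FOrd}$ is the category of $\mathfrak{Q}$-preordered $\mathfrak{Q}$-subsets and $\mathfrak{Q}$-order-preserving maps. The dual $\mathfrak{Q}$-powerset $\mathsf{P}^{\dagger}X$ consists of the potential upper $\mathfrak{Q}$-subsets, i.e. $\mathfrak{Q}$-relations $\lambda$ from some $\mathbf{1}_q$ to $X$ with $1_X^{\natural}\circ\lambda\le\lambda$, with $|\lambda|=q$ and $\mathfrak{Q}$-preorder $1_{\mathsf{P}^{\dagger}X}^{\natural}(\lambda,\lambda')=\lambda'\searrow\lambda$ (so its underlying order is the reverse of the pointwise order among elements of equal membership). The co-Yoneda embedding $\mathsf{y}^{\dagger}_X\colon X\to\mathsf{P}^{\dagger}X$ sends $x$ to $1_X^{\natural}(x,-)$, a $\mathfrak{Q}$-relation from $\mathbf{1}_{|x|}$ to $X$. *)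

theory Defs
  imports Main
begin

class unital_quantale = complete_lattice + monoid_mult +
  assumes mult_Sup_distl: "a * Sup B = (SUP b\<in>B. a * b)"
      and mult_Sup_distr: "Sup A * b = (SUP a\<in>A. a * b)"

text \<open>Implications: p * q \<le> r iff p \<le> rdiv r q iff q \<le> ldiv p r.\<close>

definition rdiv :: "'q::unital_quantale \<Rightarrow> 'q \<Rightarrow> 'q" where
  "rdiv r q = Sup {p. p * q \<le> r}"

definition ldiv :: "'q::unital_quantale \<Rightarrow> 'q \<Rightarrow> 'q" where
  "ldiv p r = Sup {q. p * q \<le> r}"

definition DQ :: "'q::unital_quantale \<Rightarrow> 'q \<Rightarrow> 'q set" where
  "DQ p q = {u. rdiv u p * p = u \<and> q * ldiv q u = u}"

text \<open>A Q-subset with a binary Q-relation on it: (carrier, membership |.|, relation).\<close>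
type_synonym ('a, 'q) qfset = "'a set \<times> ('a \<Rightarrow> 'q) \<times> ('a \<Rightarrow> 'a \<Rightarrow> 'q)"

definition carr :: "('a, 'q) qfset \<Rightarrow> 'a set" where "carr S = fst S"
definition mem :: "('a, 'q) qfset \<Rightarrow> 'a \<Rightarrow> 'q" where "mem S = fst (snd S)"
definition rel :: "('a, 'q) qfset \<Rightarrow> 'a \<Rightarrow> 'a \<Rightarrow> 'q" where "rel S = snd (snd S)"

definition is_qrel :: "'a set \<Rightarrow> ('a \<Rightarrow> 'q::unital_quantale) \<Rightarrow> 'b set \<Rightarrow> ('b \<Rightarrow> 'q)
    \<Rightarrow> ('a \<Rightarrow> 'b \<Rightarrow> 'q) \<Rightarrow> bool" where
  "is_qrel X mX Y mY phi \<longleftrightarrow> (\<forall>x\<in>X. \<forall>y\<in>Y. phi x y \<in> DQ (mX x) (mY y))"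

definition rcomp :: "'b set \<Rightarrow> ('b \<Rightarrow> 'q::unital_quantale) \<Rightarrow> ('a \<Rightarrow> 'b \<Rightarrow> 'q)
    \<Rightarrow> ('b \<Rightarrow> 'c \<Rightarrow> 'q) \<Rightarrow> ('a \<Rightarrow> 'c \<Rightarrow> 'q)" where
  "rcomp Y mY phi psi = (\<lambda>x z. SUP y\<in>Y. rdiv (psi y z) (mY y) * phi x y)"

definition qpreord :: "('a, 'q::unital_quantale) qfset \<Rightarrow> bool" where
  "qpreord S \<longleftrightarrow> is_qrel (carr S) (mem S) (carr S) (mem S) (rel S)
     \<and> (\<forall>x\<in>carr S. mem S x \<le> rel S x x)
     \<and> (\<forall>x\<in>carr S. \<forall>z\<in>carr S. rcomp (carr S) (mem S) (rel S) (rel S) x z \<le> rel S x z)"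

definition uleq :: "('a, 'q::unital_quantale) qfset \<Rightarrow> 'a \<Rightarrow> 'a \<Rightarrow> bool" where
  "uleq S x y \<longleftrightarrow> mem S x = mem S y \<and> mem S x \<le> rel S x y"

text \<open>An element of P-dagger S is a pair (q, l): a Q-relation l from 1_q to S
  (values outside the carrier are normalised to bot), with 1_S o l \<le> l.\<close>
definition PD_carrier :: "('a, 'q::unital_quantale) qfset \<Rightarrow> ('q \<times> ('a \<Rightarrow> 'q)) set" where
  "PD_carrier S = {(q, l).
      (\<forall>x\<in>carr S. l x \<in> DQ q (mem S x))
    \<and> (\<forall>x. x \<notin> carr S \<longrightarrow> l x = bot)
    \<and> (\<forall>x\<in>carr S. (SUP y\<in>carr S. rdiv (rel S y x) (mem S y) * l y) \<le> l x)}"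

text \<open>l' \<searrow> l : the largest v in DQ(|l|,|l'|) with l' o v \<le> l, where
  (l' o v)(x) = (l'(x) / |l'|) * v. (The set of such v is closed under joins,
  so its join is its largest element.)\<close>
definition PD_rel :: "('a, 'q::unital_quantale) qfset \<Rightarrow> ('q \<times> ('a \<Rightarrow> 'q))
    \<Rightarrow> ('q \<times> ('a \<Rightarrow> 'q)) \<Rightarrow> 'q" where
  "PD_rel S l l' = Sup {v \<in> DQ (fst l) (fst l').
      \<forall>x\<in>carr S. rdiv (snd l' x) (fst l') * v \<le> snd l x}"

definition PD :: "('a, 'q::unital_quantale) qfset \<Rightarrow> ('q \<times> ('a \<Rightarrow> 'q), 'q) qfset" where
  "PD S = (PD_carrier S, fst, PD_rel S)"

text \<open>Composite l o v of l in P-dagger S with v in DQ(q, |l|): a Q-relation from 1_q to S.\<close>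
definition pd_scal :: "('a, 'q::unital_quantale) qfset \<Rightarrow> ('q \<times> ('a \<Rightarrow> 'q)) \<Rightarrow> 'q \<Rightarrow> 'q
    \<Rightarrow> ('q \<times> ('a \<Rightarrow> 'q))" where
  "pd_scal S l q v = (q, \<lambda>x. if x \<in> carr S then rdiv (snd l x) (fst l) * v else bot)"

definition coyoneda :: "('a, 'q::unital_quantale) qfset \<Rightarrow> 'a \<Rightarrow> ('q \<times> ('a \<Rightarrow> 'q))" where
  "coyoneda S y = (mem S y, \<lambda>y'. if y' \<in> carr S then rel S y y' else bot)"

definition qmap :: "('a, 'q::unital_quantale) qfset \<Rightarrow> ('b, 'q) qfset \<Rightarrow> ('a \<Rightarrow> 'b) \<Rightarrow> bool" where
  "qmap S T f \<longleftrightarrow> (\<forall>x\<in>carr S. f x \<in> carr T \<and> mem T (f x) = mem S x)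
     \<and> (\<forall>x\<in>carr S. \<forall>x'\<in>carr S. rel S x x' \<le> rel T (f x) (f x'))"

definition qleq_map :: "('a, 'q::unital_quantale) qfset \<Rightarrow> ('b, 'q) qfset
    \<Rightarrow> ('a \<Rightarrow> 'b) \<Rightarrow> ('a \<Rightarrow> 'b) \<Rightarrow> bool" where
  "qleq_map S T f g \<longleftrightarrow> (\<forall>x\<in>carr S. mem S x \<le> rel T (f x) (g x))"

definition qadjoint :: "('a, 'q::unital_quantale) qfset \<Rightarrow> ('b, 'q) qfset
    \<Rightarrow> ('a \<Rightarrow> 'b) \<Rightarrow> ('b \<Rightarrow> 'a) \<Rightarrow> bool" where
  "qadjoint S T f g \<longleftrightarrow> qleq_map S S (\<lambda>x. x) (\<lambda>x. g (f x)) \<and> qleq_map T T (\<lambda>y. f (g y)) (\<lambda>y. y)"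

definition umono :: "('a, 'q::unital_quantale) qfset \<Rightarrow> ('b, 'q) qfset \<Rightarrow> ('a \<Rightarrow> 'b) \<Rightarrow> bool" where
  "umono S T f \<longleftrightarrow> (\<forall>x\<in>carr S. f x \<in> carr T)
     \<and> (\<forall>x\<in>carr S. \<forall>x'\<in>carr S. uleq S x x' \<longrightarrow> uleq T (f x) (f x'))"

definition uadjoint :: "('a, 'q::unital_quantale) qfset \<Rightarrow> ('b, 'q) qfset
    \<Rightarrow> ('a \<Rightarrow> 'b) \<Rightarrow> ('b \<Rightarrow> 'a) \<Rightarrow> bool" where
  "uadjoint S T f g \<longleftrightarrow> umono S T f \<and> umono T S g
     \<and> (\<forall>x\<in>carr S. uleq S x (g (f x))) \<and> (\<forall>y\<in>carr T. uleq T (f (g y)) y)"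

end

theory Submission
  imports Defs
begin


context unital_quantale begin end

lemma mult_mono_l: "(a::'q::unital_quantale) \<le> b \<Longrightarrow> a * c \<le> b * c"
proof -
  assume "a \<le> b"
  have "Sup {a,b} * c = (SUP x\<in>{a,b}. x * c)" by (rule mult_Sup_distr)
  then have "b * c = sup (a*c) (b*c)" using \<open>a \<le> b\<close> by (simp add: sup_absorb2)
  then show ?thesis by (metis sup.cobounded1)
qed

lemma mult_mono_r: "(a::'q::unital_quantale) \<le> b \<Longrightarrow> c * a \<le> c * b"
proof -
  assume "a \<le> b"
  have "c * Sup {a,b} = (SUP x\<in>{a,b}. c * x)" by (rule mult_Sup_distl)
  then have "c * b = sup (c*a) (c*b)" using \<open>a \<le> b\<close> by (simp add: sup_absorb2)
  then show ?thesis by (metis sup.cobounded1)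
qed

lemma mult_SUP_l: "(a::'q::unital_quantale) * (SUP i\<in>I. f i) = (SUP i\<in>I. a * f i)"
  by (simp add: mult_Sup_distl image_image)

lemma mult_SUP_r: "(SUP i\<in>I. f i) * (a::'q::unital_quantale) = (SUP i\<in>I. f i * a)"
  by (simp add: mult_Sup_distr image_image)

lemma bot_mult[simp]: "(bot::'q::unital_quantale) * a = bot"
  using mult_Sup_distr[of "{}" a] by simp

lemma mult_bot[simp]: "(a::'q::unital_quantale) * bot = bot"
  using mult_Sup_distl[of a "{}"] by simp

lemma rdiv_adj: "(p::'q::unital_quantale) * q \<le> r \<longleftrightarrow> p \<le> rdiv r q"
proof
  assume "p * q \<le> r" then show "p \<le> rdiv r q" unfolding rdiv_def by (intro Sup_upper) simp
next
  assume "p \<le> rdiv r q"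
  then have "p * q \<le> rdiv r q * q" by (rule mult_mono_l)
  also have "\<dots> = (SUP x\<in>{p. p * q \<le> r}. x * q)" unfolding rdiv_def by (rule mult_Sup_distr)
  also have "\<dots> \<le> r" by (rule SUP_least) simp
  finally show "p * q \<le> r" .
qed

lemma ldiv_adj: "(p::'q::unital_quantale) * q \<le> r \<longleftrightarrow> q \<le> ldiv p r"
proof
  assume "p * q \<le> r" then show "q \<le> ldiv p r" unfolding ldiv_def by (intro Sup_upper) simp
next
  assume "q \<le> ldiv p r"
  then have "p * q \<le> p * ldiv p r" by (rule mult_mono_r)
  also have "\<dots> = (SUP x\<in>{q. p * q \<le> r}. p * x)" unfolding ldiv_def by (rule mult_Sup_distl)
  also have "\<dots> \<le> r" by (rule SUP_least) simp
  finally show "p * q \<le> r" .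
qed

lemma rdiv_le: "rdiv r q * q \<le> (r::'q::unital_quantale)"
  using rdiv_adj by blast
lemma ldiv_le: "p * ldiv p r \<le> (r::'q::unital_quantale)"
  using ldiv_adj by blast
lemma rdiv_mono: "(r::'q::unital_quantale) \<le> r' \<Longrightarrow> rdiv r q \<le> rdiv r' q"
  by (meson order_trans rdiv_adj rdiv_le)
lemma ldiv_mono: "(r::'q::unital_quantale) \<le> r' \<Longrightarrow> ldiv p r \<le> ldiv p r'"
  by (meson order_trans ldiv_adj ldiv_le)
lemma one_le_rdiv: "(q::'q::unital_quantale) \<le> r \<Longrightarrow> 1 \<le> rdiv r q"
  by (simp add: rdiv_adj[symmetric])

lemma DQ_D1: "u \<in> DQ p q \<Longrightarrow> rdiv u p * p = u" by (simp add: DQ_def)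
lemma DQ_D2: "u \<in> DQ p q \<Longrightarrow> q * ldiv q u = u" by (simp add: DQ_def)

lemma DQ_I: "(u::'q::unital_quantale) \<le> rdiv u p * p \<Longrightarrow> u \<le> q * ldiv q u \<Longrightarrow> u \<in> DQ p q"
  unfolding DQ_def using rdiv_le[of u p] ldiv_le[of q u] by (auto intro: order_antisym)

lemma DQ_Sup: "U \<subseteq> DQ p q \<Longrightarrow> Sup U \<in> DQ (p::'q::unital_quantale) q"
proof (rule DQ_I)
  assume U: "U \<subseteq> DQ p q"
  show "Sup U \<le> rdiv (Sup U) p * p"
  proof (rule Sup_least)
    fix u assume "u \<in> U"
    then have "u = rdiv u p * p" using U DQ_D1[of u p q] by auto
    also have "\<dots> \<le> rdiv (Sup U) p * p" using \<open>u \<in> U\<close> by (intro mult_mono_l rdiv_mono Sup_upper)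
    finally show "u \<le> rdiv (Sup U) p * p" .
  qed
  show "Sup U \<le> q * ldiv q (Sup U)"
  proof (rule Sup_least)
    fix u assume "u \<in> U"
    then have "u = q * ldiv q u" using U DQ_D2[of u p q] by auto
    also have "\<dots> \<le> q * ldiv q (Sup U)" using \<open>u \<in> U\<close> by (intro mult_mono_r ldiv_mono Sup_upper)
    finally show "u \<le> q * ldiv q (Sup U)" .
  qed
qed

lemma DQ_bot: "bot \<in> DQ p (q::'q::unital_quantale)"
  using DQ_Sup[of "{}" p q] by simp

lemma DQ_refl: "q \<in> DQ q (q::'q::unital_quantale)"
proof (rule DQ_I)
  have "1 \<le> rdiv q q" by (simp add: one_le_rdiv)
  then show "q \<le> rdiv q q * q" using mult_mono_l[of 1 "rdiv q q" q] by simp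
  have "1 \<le> ldiv q q" by (simp add: ldiv_adj[symmetric])
  then show "q \<le> q * ldiv q q" using mult_mono_r[of 1 "ldiv q q" q] by simp
qed

lemma S1: "a = rdiv a m * m \<Longrightarrow> v = m * ldiv m v \<Longrightarrow> rdiv a m * v = (a::'q::unital_quantale) * ldiv m v"
  by (metis mult.assoc)

lemma rdiv_mult_eq: "v = rdiv v q * q \<Longrightarrow> c * v = rdiv (c * v) q * (q::'q::unital_quantale)"
proof (rule order_antisym)
  assume "v = rdiv v q * q"
  then have "c * rdiv v q * q = c * v" by (metis mult.assoc)
  then have "c * rdiv v q \<le> rdiv (c * v) q" by (metis rdiv_adj order_refl)
  then have "c * rdiv v q * q \<le> rdiv (c * v) q * q" by (rule mult_mono_l)
  then show "c * v \<le> rdiv (c * v) q * q" using \<open>c * rdiv v q * q = c * v\<close> by simp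
qed (rule rdiv_le)

lemma S2: "v = rdiv v q * q \<Longrightarrow> w = q * ldiv q w \<Longrightarrow>
   rdiv (c * v) q * w = (c::'q::unital_quantale) * (rdiv v q * w)"
proof -
  assume v: "v = rdiv v q * q" and w: "w = q * ldiv q w"
  have "rdiv (c * v) q * w = c * v * ldiv q w" using S1[OF rdiv_mult_eq[OF v] w] .
  also have "\<dots> = c * (rdiv v q * w)" using S1[OF v w] by (simp add: mult.assoc)
  finally show ?thesis .
qed

lemma DQ_comp: "v \<in> DQ q m \<Longrightarrow> w \<in> DQ p q \<Longrightarrow> rdiv v q * w \<in> DQ p (m::'q::unital_quantale)"
proof (rule DQ_I)
  assume v: "v \<in> DQ q m" and w: "w \<in> DQ p q"
  show "rdiv v q * w \<le> rdiv (rdiv v q * w) p * p"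
    using rdiv_mult_eq[of w p "rdiv v q"] DQ_D1[OF w] by simp
  have e: "rdiv v q * w = v * ldiv q w" using S1[of v q w] DQ_D1[OF v] DQ_D2[OF w] by simp
  also have "\<dots> = m * (ldiv m v * ldiv q w)" using DQ_D2[OF v] by (metis mult.assoc)
  also have "\<dots> \<le> m * ldiv m (m * (ldiv m v * ldiv q w))" 
    by (intro mult_mono_r) (simp add: ldiv_adj[symmetric])
  finally show "rdiv v q * w \<le> m * ldiv m (rdiv v q * w)"
    using e DQ_D2[OF v] by (metis mult.assoc)
qed



lemma PD_simps[simp]: "carr (PD S) = PD_carrier S" "mem (PD S) = fst" "rel (PD S) = PD_rel S"
  by (simp_all add: PD_def carr_def mem_def rel_def)

lemma PDcD1: "l \<in> PD_carrier S \<Longrightarrow> x \<in> carr S \<Longrightarrow> snd l x \<in> DQ (fst l) (mem S x)"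
  by (cases l) (auto simp: PD_carrier_def)
lemma PDcD2: "l \<in> PD_carrier S \<Longrightarrow> x \<notin> carr S \<Longrightarrow> snd l x = bot"
  by (cases l) (auto simp: PD_carrier_def)
lemma PDcD3: "l \<in> PD_carrier S \<Longrightarrow> x \<in> carr S \<Longrightarrow>
   (SUP y\<in>carr S. rdiv (rel S y x) (mem S y) * snd l y) \<le> snd l x"
  by (cases l) (auto simp: PD_carrier_def)
lemma PDcI: "(\<And>x. x\<in>carr S \<Longrightarrow> snd l x \<in> DQ (fst l) (mem S x)) \<Longrightarrow>
   (\<And>x. x \<notin> carr S \<Longrightarrow> snd l x = bot) \<Longrightarrow>
   (\<And>x. x\<in>carr S \<Longrightarrow> (SUP y\<in>carr S. rdiv (rel S y x) (mem S y) * snd l y) \<le> snd l x) \<Longrightarrow>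
   l \<in> PD_carrier S"
  by (cases l) (auto simp: PD_carrier_def)

lemma PD_rel_props:
  fixes S :: "('a, 'q::unital_quantale) qfset"
  shows "PD_rel S l l' \<in> DQ (fst l) (fst l')"
    and "\<And>x. x \<in> carr S \<Longrightarrow> rdiv (snd l' x) (fst l') * PD_rel S l l' \<le> snd l x"
proof -
  let ?A = "{v \<in> DQ (fst l) (fst l'). \<forall>x\<in>carr S. rdiv (snd l' x) (fst l') * v \<le> snd l x}"
  show "PD_rel S l l' \<in> DQ (fst l) (fst l')" unfolding PD_rel_def by (rule DQ_Sup) auto
  fix x assume x: "x \<in> carr S"
  have "rdiv (snd l' x) (fst l') * Sup ?A = (SUP v\<in>?A. rdiv (snd l' x) (fst l') * v)"
    by (rule mult_Sup_distl)
  also have "\<dots> \<le> snd l x" using x by (intro SUP_least) auto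
  finally show "rdiv (snd l' x) (fst l') * PD_rel S l l' \<le> snd l x" unfolding PD_rel_def .
qed

lemma PD_rel_upper: "v \<in> DQ (fst l) (fst l') \<Longrightarrow>
   (\<And>x. x \<in> carr S \<Longrightarrow> rdiv (snd l' x) (fst l') * v \<le> snd l x) \<Longrightarrow> v \<le> PD_rel S l l'"
  unfolding PD_rel_def by (intro Sup_upper) auto

lemma uleq_PD:
  assumes b: "b \<in> PD_carrier S"
  shows "uleq (PD S) a b \<longleftrightarrow> fst a = fst b \<and> (\<forall>x\<in>carr S. snd b x \<le> snd a x)"
proof
  assume u: "uleq (PD S) a b"
  then have f: "fst a = fst b" and le: "fst a \<le> PD_rel S a b" by (auto simp: uleq_def)
  show "fst a = fst b \<and> (\<forall>x\<in>carr S. snd b x \<le> snd a x)"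
  proof (intro conjI ballI f)
    fix x assume x: "x \<in> carr S"
    have "snd b x = rdiv (snd b x) (fst b) * fst b" using DQ_D1[OF PDcD1[OF b x]] by simp
    also have "\<dots> \<le> rdiv (snd b x) (fst b) * PD_rel S a b" using le f by (intro mult_mono_r) simp
    also have "\<dots> \<le> snd a x" by (rule PD_rel_props(2)[OF x])
    finally show "snd b x \<le> snd a x" .
  qed
next
  assume h: "fst a = fst b \<and> (\<forall>x\<in>carr S. snd b x \<le> snd a x)"
  have "fst a \<le> PD_rel S a b"
  proof (rule PD_rel_upper)
    show "fst a \<in> DQ (fst a) (fst b)" using h DQ_refl by simp
    fix x assume x: "x \<in> carr S"
    show "rdiv (snd b x) (fst b) * fst a \<le> snd a x"
      using DQ_D1[OF PDcD1[OF b x]] h x by simp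
  qed
  then show "uleq (PD S) a b" using h by (simp add: uleq_def)
qed

lemma PD_eq:
  assumes "a \<in> PD_carrier S" "b \<in> PD_carrier S" "fst a = fst b" "\<And>x. x \<in> carr S \<Longrightarrow> snd a x = snd b x"
  shows "a = b"
proof -
  have "snd a = snd b"
  proof
    fix x show "snd a x = snd b x"
      using assms PDcD2[OF assms(1), of x] PDcD2[OF assms(2), of x] by (cases "x \<in> carr S") auto
  qed
  then show ?thesis using assms(3) by (simp add: prod_eq_iff)
qed

lemma uleq_PD_antisym:
  "a \<in> PD_carrier S \<Longrightarrow> b \<in> PD_carrier S \<Longrightarrow> uleq (PD S) a b \<Longrightarrow> uleq (PD S) b a \<Longrightarrow> a = b"
  by (rule PD_eq) (auto simp: uleq_PD intro: order_antisym)

lemma uleq_PD_trans: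
  "b \<in> PD_carrier S \<Longrightarrow> c \<in> PD_carrier S \<Longrightarrow> uleq (PD S) a b \<Longrightarrow> uleq (PD S) b c \<Longrightarrow> uleq (PD S) a c"
  by (auto simp: uleq_PD intro: order_trans)

lemma uleq_PD_refl: "a \<in> PD_carrier S \<Longrightarrow> uleq (PD S) a a"
  by (simp add: uleq_PD)

lemma pd_scal_simps: "fst (pd_scal S l q v) = q"
   "x \<in> carr S \<Longrightarrow> snd (pd_scal S l q v) x = rdiv (snd l x) (fst l) * v"
   "x \<notin> carr S \<Longrightarrow> snd (pd_scal S l q v) x = bot"
  by (simp_all add: pd_scal_def)

lemma pd_scal_val:
  assumes l: "l \<in> PD_carrier S" and v: "v \<in> DQ q (fst l)" and x: "x \<in> carr S"
  shows "snd (pd_scal S l q v) x = snd l x * ldiv (fst l) v"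
  using S1[of "snd l x" "fst l" v] DQ_D1[OF PDcD1[OF l x]] DQ_D2[OF v] x
  by (simp add: pd_scal_simps)

lemma pd_scal_carrier:
  assumes l: "l \<in> PD_carrier S" and v: "v \<in> DQ q (fst l)"
  shows "pd_scal S l q v \<in> PD_carrier S"
proof (rule PDcI)
  fix x assume x: "x \<in> carr S"
  show "snd (pd_scal S l q v) x \<in> DQ (fst (pd_scal S l q v)) (mem S x)"
    using DQ_comp[OF PDcD1[OF l x] v] x by (simp add: pd_scal_simps)
  have "(SUP y\<in>carr S. rdiv (rel S y x) (mem S y) * snd (pd_scal S l q v) y)
      = (SUP y\<in>carr S. rdiv (rel S y x) (mem S y) * snd l y * ldiv (fst l) v)"
    by (rule SUP_cong) (simp_all add: pd_scal_val[OF l v] mult.assoc)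
  also have "\<dots> = (SUP y\<in>carr S. rdiv (rel S y x) (mem S y) * snd l y) * ldiv (fst l) v"
    by (rule mult_SUP_r[symmetric])
  also have "\<dots> \<le> snd l x * ldiv (fst l) v" by (rule mult_mono_l[OF PDcD3[OF l x]])
  also have "\<dots> = snd (pd_scal S l q v) x" using pd_scal_val[OF l v x] by simp
  finally show "(SUP y\<in>carr S. rdiv (rel S y x) (mem S y) * snd (pd_scal S l q v) y) \<le> snd (pd_scal S l q v) x" .
qed (simp add: pd_scal_simps)

lemma PD_rel_scal:
  assumes v: "v \<in> DQ q (fst mu)"
  shows "PD_rel S lam (pd_scal S mu q v) = Sup {w \<in> DQ (fst lam) q. rdiv v q * w \<le> PD_rel S lam mu}"
proof -
  have "{w \<in> DQ (fst lam) (fst (pd_scal S mu q v)). \<forall>x\<in>carr S.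
          rdiv (snd (pd_scal S mu q v) x) (fst (pd_scal S mu q v)) * w \<le> snd lam x}
      = {w \<in> DQ (fst lam) q. rdiv v q * w \<le> PD_rel S lam mu}"
  proof (intro set_eqI iffI)
    fix w assume "w \<in> {w \<in> DQ (fst lam) (fst (pd_scal S mu q v)). \<forall>x\<in>carr S.
          rdiv (snd (pd_scal S mu q v) x) (fst (pd_scal S mu q v)) * w \<le> snd lam x}"
    then have w: "w \<in> DQ (fst lam) q" and h: "\<forall>x\<in>carr S.
          rdiv (rdiv (snd mu x) (fst mu) * v) q * w \<le> snd lam x" by (auto simp: pd_scal_simps)
    have "rdiv v q * w \<le> PD_rel S lam mu"
    proof (rule PD_rel_upper)
      show "rdiv v q * w \<in> DQ (fst lam) (fst mu)" by (rule DQ_comp[OF v w])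
      fix x assume x: "x \<in> carr S"
      show "rdiv (snd mu x) (fst mu) * (rdiv v q * w) \<le> snd lam x"
        using h x S2[of v q w "rdiv (snd mu x) (fst mu)"] DQ_D1[OF v] DQ_D2[OF w] by metis
    qed
    then show "w \<in> {w \<in> DQ (fst lam) q. rdiv v q * w \<le> PD_rel S lam mu}" using w by simp
  next
    fix w assume "w \<in> {w \<in> DQ (fst lam) q. rdiv v q * w \<le> PD_rel S lam mu}"
    then have w: "w \<in> DQ (fst lam) q" and h: "rdiv v q * w \<le> PD_rel S lam mu" by auto
    have "\<forall>x\<in>carr S. rdiv (rdiv (snd mu x) (fst mu) * v) q * w \<le> snd lam x"
    proof
      fix x assume x: "x \<in> carr S"
      have "rdiv (rdiv (snd mu x) (fst mu) * v) q * w = rdiv (snd mu x) (fst mu) * (rdiv v q * w)"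
        using S2[of v q w "rdiv (snd mu x) (fst mu)"] DQ_D1[OF v] DQ_D2[OF w] by simp
      also have "\<dots> \<le> rdiv (snd mu x) (fst mu) * PD_rel S lam mu" using h by (rule mult_mono_r)
      also have "\<dots> \<le> snd lam x" by (rule PD_rel_props(2)[OF x])
      finally show "rdiv (rdiv (snd mu x) (fst mu) * v) q * w \<le> snd lam x" .
    qed
    then show "w \<in> {w \<in> DQ (fst lam) (fst (pd_scal S mu q v)). \<forall>x\<in>carr S.
          rdiv (snd (pd_scal S mu q v) x) (fst (pd_scal S mu q v)) * w \<le> snd lam x}"
      using w by (auto simp: pd_scal_simps)
  qed
  then show ?thesis unfolding PD_rel_def by simp
qed

lemma PD_rel_trans0:
  "rdiv (PD_rel S b c) (fst b) * PD_rel S a b \<le> PD_rel S a c"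
proof (rule PD_rel_upper)
  show "rdiv (PD_rel S b c) (fst b) * PD_rel S a b \<in> DQ (fst a) (fst c)"
    by (rule DQ_comp[OF PD_rel_props(1) PD_rel_props(1)])
  fix x assume x: "x \<in> carr S"
  have "rdiv (snd c x) (fst c) * rdiv (PD_rel S b c) (fst b) * fst b
        = rdiv (snd c x) (fst c) * PD_rel S b c"
    using DQ_D1[OF PD_rel_props(1)[of S b c]] by (simp add: mult.assoc)
  also have "\<dots> \<le> snd b x" by (rule PD_rel_props(2)[OF x])
  finally have "rdiv (snd c x) (fst c) * rdiv (PD_rel S b c) (fst b) \<le> rdiv (snd b x) (fst b)"
    by (simp add: rdiv_adj)
  then have "rdiv (snd c x) (fst c) * rdiv (PD_rel S b c) (fst b) * PD_rel S a b
       \<le> rdiv (snd b x) (fst b) * PD_rel S a b" by (rule mult_mono_l)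
  also have "\<dots> \<le> snd a x" by (rule PD_rel_props(2)[OF x])
  finally show "rdiv (snd c x) (fst c) * (rdiv (PD_rel S b c) (fst b) * PD_rel S a b) \<le> snd a x"
    by (simp add: mult.assoc)
qed

lemma PD_rel_trans1: "fst b \<le> PD_rel S b c \<Longrightarrow> PD_rel S a b \<le> PD_rel S a c"
proof -
  assume "fst b \<le> PD_rel S b c"
  then have "1 \<le> rdiv (PD_rel S b c) (fst b)" by (rule one_le_rdiv)
  then have "1 * PD_rel S a b \<le> rdiv (PD_rel S b c) (fst b) * PD_rel S a b" by (rule mult_mono_l)
  then show ?thesis using PD_rel_trans0[of S b c a] by simp
qed

lemma PD_rel_trans2: "fst b \<le> PD_rel S a b \<Longrightarrow> PD_rel S b c \<le> PD_rel S a c"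
proof -
  assume "fst b \<le> PD_rel S a b"
  then have "rdiv (PD_rel S b c) (fst b) * fst b \<le> rdiv (PD_rel S b c) (fst b) * PD_rel S a b"
    by (rule mult_mono_r)
  then show ?thesis using PD_rel_trans0[of S b c a] DQ_D1[OF PD_rel_props(1)[of S b c]] by simp
qed

lemma coyoneda_fst[simp]: "fst (coyoneda S y) = mem S y"
  by (simp add: coyoneda_def)
lemma coyoneda_snd: "x \<in> carr S \<Longrightarrow> snd (coyoneda S y) x = rel S y x"
  by (simp add: coyoneda_def)

lemma coyoneda_carrier:
  assumes S: "qpreord S" and y: "y \<in> carr S"
  shows "coyoneda S y \<in> PD_carrier S"
proof (rule PDcI)
  fix x assume x: "x \<in> carr S"
  show "snd (coyoneda S y) x \<in> DQ (fst (coyoneda S y)) (mem S x)"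
    using S x y by (simp add: coyoneda_snd qpreord_def is_qrel_def)
  have "(SUP z\<in>carr S. rdiv (rel S z x) (mem S z) * snd (coyoneda S y) z)
      = rcomp (carr S) (mem S) (rel S) (rel S) y x"
    unfolding rcomp_def by (rule SUP_cong) (simp_all add: coyoneda_snd)
  also have "\<dots> \<le> rel S y x" using S x y by (simp add: qpreord_def)
  finally show "(SUP z\<in>carr S. rdiv (rel S z x) (mem S z) * snd (coyoneda S y) z) \<le> snd (coyoneda S y) x"
    using x by (simp add: coyoneda_snd)
qed (simp add: coyoneda_def)

lemma PD_decomp:
  assumes S: "qpreord S" and l: "l \<in> PD_carrier S" and x: "x \<in> carr S"
  shows "snd l x = (SUP y\<in>carr S. rdiv (rel S y x) (mem S y) * snd l y)"
proof (rule order_antisym)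
  show "(SUP y\<in>carr S. rdiv (rel S y x) (mem S y) * snd l y) \<le> snd l x" by (rule PDcD3[OF l x])
  have "mem S x \<le> rel S x x" using S x by (simp add: qpreord_def)
  then have "1 \<le> rdiv (rel S x x) (mem S x)" by (rule one_le_rdiv)
  then have "1 * snd l x \<le> rdiv (rel S x x) (mem S x) * snd l x" by (rule mult_mono_l)
  also have "\<dots> \<le> (SUP y\<in>carr S. rdiv (rel S y x) (mem S y) * snd l y)"
    using x by (rule SUP_upper)
  finally show "snd l x \<le> (SUP y\<in>carr S. rdiv (rel S y x) (mem S y) * snd l y)" by simp
qed



lemma qmap_umono: "qmap S T f \<Longrightarrow> umono S T f"
  unfolding qmap_def umono_def uleq_def by (metis order_trans)

lemma qmapD: "qmap S T f \<Longrightarrow> x \<in> carr S \<Longrightarrow> f x \<in> carr T"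
  "qmap S T f \<Longrightarrow> x \<in> carr S \<Longrightarrow> mem T (f x) = mem S x"
  "qmap S T f \<Longrightarrow> x \<in> carr S \<Longrightarrow> x' \<in> carr S \<Longrightarrow> rel S x x' \<le> rel T (f x) (f x')"
  by (auto simp: qmap_def)

lemma umonoD: "umono S T f \<Longrightarrow> x \<in> carr S \<Longrightarrow> f x \<in> carr T"
  "umono S T f \<Longrightarrow> x \<in> carr S \<Longrightarrow> x' \<in> carr S \<Longrightarrow> uleq S x x' \<Longrightarrow> uleq T (f x) (f x')"
  by (auto simp: umono_def)

lemma i_ii:
  fixes X :: "('a, 'q::unital_quantale) qfset" and Y :: "('b, 'q) qfset"
  assumes g: "qmap (PD Y) (PD X) g" and f: "qmap (PD X) (PD Y) f"
    and adj: "qadjoint (PD X) (PD Y) f g"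
  shows "uadjoint (PD X) (PD Y) f g"
    and "\<forall>l\<in>carr (PD Y). \<forall>q. \<forall>v\<in>DQ q (mem (PD Y) l). g (pd_scal Y l q v) = pd_scal X (g l) q v"
proof -
  have unit: "fst lam \<le> PD_rel X lam (g (f lam))" if "lam \<in> PD_carrier X" for lam
    using adj that by (simp add: qadjoint_def qleq_map_def)
  have counit: "fst mu \<le> PD_rel Y (f (g mu)) mu" if "mu \<in> PD_carrier Y" for mu
    using adj that by (simp add: qadjoint_def qleq_map_def)
  have fC: "f lam \<in> PD_carrier Y" "fst (f lam) = fst lam" if "lam \<in> PD_carrier X" for lam
    using qmapD(1,2)[OF f, of lam] that by auto
  have gC: "g mu \<in> PD_carrier X" "fst (g mu) = fst mu" if "mu \<in> PD_carrier Y" for mu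
    using qmapD(1,2)[OF g, of mu] that by auto
  show "uadjoint (PD X) (PD Y) f g"
    unfolding uadjoint_def
  proof (intro conjI ballI qmap_umono f g)
    fix x assume x: "x \<in> carr (PD X)"
    then show "uleq (PD X) x (g (f x))" using unit[of x] fC[of x] gC[of "f x"] by (simp add: uleq_def)
  next
    fix y assume y: "y \<in> carr (PD Y)"
    then show "uleq (PD Y) (f (g y)) y" using counit[of y] fC[of "g y"] gC[of y] by (simp add: uleq_def)
  qed
  have adjeq: "PD_rel X lam (g mu) = PD_rel Y (f lam) mu"
    if lam: "lam \<in> PD_carrier X" and mu: "mu \<in> PD_carrier Y" for lam mu
  proof (rule order_antisym)
    have "PD_rel X lam (g mu) \<le> PD_rel Y (f lam) (f (g mu))"
      using qmapD(3)[OF f, of lam "g mu"] lam gC[OF mu] by simp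
    also have "\<dots> \<le> PD_rel Y (f lam) mu"
      by (rule PD_rel_trans1) (use counit[OF mu] fC[OF gC(1)[OF mu]] gC[OF mu] in simp)
    finally show "PD_rel X lam (g mu) \<le> PD_rel Y (f lam) mu" .
    have "PD_rel Y (f lam) mu \<le> PD_rel X (g (f lam)) (g mu)"
      using qmapD(3)[OF g, of "f lam" mu] fC[OF lam] mu by simp
    also have "\<dots> \<le> PD_rel X lam (g mu)"
      by (rule PD_rel_trans2) (use unit[OF lam] gC[OF fC(1)[OF lam]] fC[OF lam] in simp)
    finally show "PD_rel Y (f lam) mu \<le> PD_rel X lam (g mu)" .
  qed
  show "\<forall>l\<in>carr (PD Y). \<forall>q. \<forall>v\<in>DQ q (mem (PD Y) l). g (pd_scal Y l q v) = pd_scal X (g l) q v"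
  proof (intro ballI allI)
    fix l q v assume l: "l \<in> carr (PD Y)" and v: "v \<in> DQ q (mem (PD Y) l)"
    then have l: "l \<in> PD_carrier Y" and v: "v \<in> DQ q (fst l)" by auto
    define a where "a = g (pd_scal Y l q v)"
    define b where "b = pd_scal X (g l) q v"
    have sc: "pd_scal Y l q v \<in> PD_carrier Y" by (rule pd_scal_carrier[OF l v])
    have aC: "a \<in> PD_carrier X" "fst a = q" unfolding a_def using gC[OF sc] by (simp_all add: pd_scal_simps)
    have v': "v \<in> DQ q (fst (g l))" using v gC[OF l] by simp
    have bC: "b \<in> PD_carrier X" "fst b = q" unfolding b_def
      using pd_scal_carrier[OF gC(1)[OF l] v'] by (simp_all add: pd_scal_simps)
    have same: "PD_rel X lam a = PD_rel X lam b" if lam: "lam \<in> PD_carrier X" for lam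
    proof -
      have "PD_rel X lam a = PD_rel Y (f lam) (pd_scal Y l q v)" unfolding a_def by (rule adjeq[OF lam sc])
      also have "\<dots> = Sup {w \<in> DQ (fst (f lam)) q. rdiv v q * w \<le> PD_rel Y (f lam) l}"
        by (rule PD_rel_scal[OF v])
      also have "\<dots> = Sup {w \<in> DQ (fst lam) q. rdiv v q * w \<le> PD_rel X lam (g l)}"
        using adjeq[OF lam l] fC[OF lam] by simp
      also have "\<dots> = PD_rel X lam b" unfolding b_def by (rule PD_rel_scal[OF v', symmetric])
      finally show ?thesis .
    qed
    have "uleq (PD X) a b"
      using uleq_PD_refl[OF aC(1)] same[OF aC(1)] aC bC by (simp add: uleq_def)
    moreover have "uleq (PD X) b a"
      using uleq_PD_refl[OF bC(1)] same[OF bC(1)] aC bC by (simp add: uleq_def)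
    ultimately show "g (pd_scal Y l q v) = pd_scal X (g l) q v"
      unfolding a_def[symmetric] b_def[symmetric] using aC bC by (intro uleq_PD_antisym)
  qed
qed



lemma uadjD:
  assumes ua: "uadjoint (PD X) (PD Y) f g" and g: "qmap (PD Y) (PD X) g"
  shows "\<And>lam. lam \<in> PD_carrier X \<Longrightarrow> f lam \<in> PD_carrier Y"
    and "\<And>lam. lam \<in> PD_carrier X \<Longrightarrow> fst (f lam) = fst lam"
    and "\<And>mu. mu \<in> PD_carrier Y \<Longrightarrow> g mu \<in> PD_carrier X"
    and "\<And>mu. mu \<in> PD_carrier Y \<Longrightarrow> fst (g mu) = fst mu"
    and "\<And>lam. lam \<in> PD_carrier X \<Longrightarrow> uleq (PD X) lam (g (f lam))"
    and "\<And>mu. mu \<in> PD_carrier Y \<Longrightarrow> uleq (PD Y) (f (g mu)) mu"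
    and "\<And>a b. a \<in> PD_carrier X \<Longrightarrow> b \<in> PD_carrier X \<Longrightarrow> uleq (PD X) a b \<Longrightarrow> uleq (PD Y) (f a) (f b)"
    and "\<And>a b. a \<in> PD_carrier Y \<Longrightarrow> b \<in> PD_carrier Y \<Longrightarrow> uleq (PD Y) a b \<Longrightarrow> uleq (PD X) (g a) (g b)"
    and "\<And>a b. a \<in> PD_carrier X \<Longrightarrow> b \<in> PD_carrier Y \<Longrightarrow> uleq (PD X) a (g b) \<Longrightarrow> uleq (PD Y) (f a) b"
proof -
  have um1: "umono (PD X) (PD Y) f" and um2: "umono (PD Y) (PD X) g"
    using ua by (auto simp: uadjoint_def)
  show fC: "\<And>lam. lam \<in> PD_carrier X \<Longrightarrow> f lam \<in> PD_carrier Y" using umonoD(1)[OF um1] by simp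
  show gC: "\<And>mu. mu \<in> PD_carrier Y \<Longrightarrow> g mu \<in> PD_carrier X" using umonoD(1)[OF um2] by simp
  show gF: "\<And>mu. mu \<in> PD_carrier Y \<Longrightarrow> fst (g mu) = fst mu" using qmapD(2)[OF g] by simp
  show un: "\<And>lam. lam \<in> PD_carrier X \<Longrightarrow> uleq (PD X) lam (g (f lam))" using ua by (simp add: uadjoint_def)
  show cu: "\<And>mu. mu \<in> PD_carrier Y \<Longrightarrow> uleq (PD Y) (f (g mu)) mu" using ua by (simp add: uadjoint_def)
  show "\<And>lam. lam \<in> PD_carrier X \<Longrightarrow> fst (f lam) = fst lam"
    using un gF fC by (simp add: uleq_def)
  show fm: "\<And>a b. a \<in> PD_carrier X \<Longrightarrow> b \<in> PD_carrier X \<Longrightarrow> uleq (PD X) a b \<Longrightarrow> uleq (PD Y) (f a) (f b)"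
    using umonoD(2)[OF um1] by simp
  show "\<And>a b. a \<in> PD_carrier Y \<Longrightarrow> b \<in> PD_carrier Y \<Longrightarrow> uleq (PD Y) a b \<Longrightarrow> uleq (PD X) (g a) (g b)"
    using umonoD(2)[OF um2] by simp
  fix a b assume a: "a \<in> PD_carrier X" and b: "b \<in> PD_carrier Y" and h: "uleq (PD X) a (g b)"
  have "uleq (PD Y) (f a) (f (g b))" by (rule fm[OF a gC[OF b] h])
  then show "uleq (PD Y) (f a) b" using uleq_PD_trans fC gC b cu by metis
qed

lemma ii_i:
  fixes X :: "('a, 'q::unital_quantale) qfset" and Y :: "('b, 'q) qfset"
  assumes g: "qmap (PD Y) (PD X) g" and ua: "uadjoint (PD X) (PD Y) f g"
    and sc: "\<forall>l\<in>carr (PD Y). \<forall>q. \<forall>v\<in>DQ q (mem (PD Y) l). g (pd_scal Y l q v) = pd_scal X (g l) q v"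
  shows "qmap (PD X) (PD Y) f \<and> qadjoint (PD X) (PD Y) f g"
proof -
  note D = uadjD[OF ua g]
  have relp: "PD_rel X lam lam' \<le> PD_rel Y (f lam) (f lam')"
    if lam: "lam \<in> PD_carrier X" and lam': "lam' \<in> PD_carrier X" for lam lam'
  proof -
    define r where "r = PD_rel X lam lam'"
    define p where "p = fst lam"
    have r: "r \<in> DQ p (fst lam')" unfolding r_def p_def by (rule PD_rel_props(1))
    define nu where "nu = pd_scal X lam' p r"
    have nuC: "nu \<in> PD_carrier X" unfolding nu_def by (rule pd_scal_carrier[OF lam' r])
    have r': "r \<in> DQ p (fst (f lam'))" using r D(2)[OF lam'] by simp
    have sC: "pd_scal Y (f lam') p r \<in> PD_carrier Y" by (rule pd_scal_carrier[OF D(1)[OF lam'] r'])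
    have 1: "uleq (PD X) lam nu"
    proof -
      have "fst lam = fst nu \<and> (\<forall>x\<in>carr X. snd nu x \<le> snd lam x)"
        unfolding nu_def p_def r_def by (auto simp: pd_scal_simps intro: PD_rel_props(2))
      then show ?thesis using uleq_PD[OF nuC] by blast
    qed
    have gs: "g (pd_scal Y (f lam') p r) = pd_scal X (g (f lam')) p r"
      using sc D(1)[OF lam'] r' by simp
    have gfl: "g (f lam') \<in> PD_carrier X" by (rule D(3)[OF D(1)[OF lam']])
    have r'': "r \<in> DQ p (fst (g (f lam')))" using r' D(4)[OF D(1)[OF lam']] by simp
    have u2: "uleq (PD X) lam' (g (f lam'))" by (rule D(5)[OF lam'])
    have 2: "uleq (PD X) nu (g (pd_scal Y (f lam') p r))"
      unfolding gs uleq_PD[OF pd_scal_carrier[OF gfl r'']] nu_def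
      using u2 D(2)[OF lam'] D(4)[OF D(1)[OF lam']] unfolding uleq_PD[OF gfl]
      by (auto simp: pd_scal_simps intro!: mult_mono_l rdiv_mono)
    have 3: "uleq (PD Y) (f nu) (pd_scal Y (f lam') p r)" by (rule D(9)[OF nuC sC 2])
    have 4: "uleq (PD Y) (f lam) (f nu)" by (rule D(7)[OF lam nuC 1])
    have 5: "uleq (PD Y) (f lam) (pd_scal Y (f lam') p r)"
      by (rule uleq_PD_trans[OF D(1)[OF nuC] sC 4 3])
    show ?thesis unfolding r_def[symmetric]
    proof (rule PD_rel_upper)
      show "r \<in> DQ (fst (f lam)) (fst (f lam'))" using r' D(2)[OF lam] p_def by simp
      fix x assume x: "x \<in> carr Y"
      show "rdiv (snd (f lam') x) (fst (f lam')) * r \<le> snd (f lam) x"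
        using 5 x unfolding uleq_PD[OF sC] by (simp add: pd_scal_simps)
    qed
  qed
  have "qmap (PD X) (PD Y) f" unfolding qmap_def using D(1,2) relp by simp
  moreover have "qadjoint (PD X) (PD Y) f g"
    unfolding qadjoint_def qleq_map_def
  proof (intro conjI ballI)
    fix x assume "x \<in> carr (PD X)"
    then show "mem (PD X) x \<le> rel (PD X) x (g (f x))" using D(5)[of x] unfolding uleq_def PD_simps by blast
  next
    fix y assume y: "y \<in> carr (PD Y)"
    then have "uleq (PD Y) (f (g y)) y" using D(6) by simp
    then show "mem (PD Y) y \<le> rel (PD Y) (f (g y)) y" unfolding uleq_def PD_simps by metis
  qed
  ultimately show ?thesis by simp
qed

lemma join_carrier:
  assumes "\<And>i. i \<in> I \<Longrightarrow> mus i \<in> PD_carrier S" "\<And>i. i \<in> I \<Longrightarrow> fst (mus i) = q"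
  shows "(q, \<lambda>x. if x \<in> carr S then SUP i\<in>I. snd (mus i) x else bot) \<in> PD_carrier S"
proof (rule PDcI)
  fix x assume x: "x \<in> carr S"
  show "snd (q, \<lambda>x. if x \<in> carr S then SUP i\<in>I. snd (mus i) x else bot) x
        \<in> DQ (fst (q, \<lambda>x. if x \<in> carr S then SUP i\<in>I. snd (mus i) x else bot)) (mem S x)"
    using x assms PDcD1[OF assms(1)] by (auto intro!: DQ_Sup)
  have "rdiv (rel S y x) (mem S y) * (SUP i\<in>I. snd (mus i) y) \<le> (SUP i\<in>I. snd (mus i) x)"
    if y: "y \<in> carr S" for y
  proof -
    have "rdiv (rel S y x) (mem S y) * (SUP i\<in>I. snd (mus i) y) = (SUP i\<in>I. rdiv (rel S y x) (mem S y) * snd (mus i) y)"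
      by (rule mult_SUP_l)
    also have "\<dots> \<le> (SUP i\<in>I. snd (mus i) x)"
    proof (rule SUP_mono)
      fix i assume i: "i \<in> I"
      have "rdiv (rel S y x) (mem S y) * snd (mus i) y \<le> (SUP y\<in>carr S. rdiv (rel S y x) (mem S y) * snd (mus i) y)"
        using y by (rule SUP_upper)
      also have "\<dots> \<le> snd (mus i) x" by (rule PDcD3[OF assms(1)[OF i] x])
      finally show "\<exists>j\<in>I. rdiv (rel S y x) (mem S y) * snd (mus i) y \<le> snd (mus j) x" using i by blast
    qed
    finally show ?thesis .
  qed
  then show "(SUP y\<in>carr S. rdiv (rel S y x) (mem S y) * snd (q, \<lambda>x. if x \<in> carr S then SUP i\<in>I. snd (mus i) x else bot) y)
        \<le> snd (q, \<lambda>x. if x \<in> carr S then SUP i\<in>I. snd (mus i) x else bot) x"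
    using x by (auto intro!: SUP_least)
qed simp

lemma join_pres:
  fixes X :: "('a, 'q::unital_quantale) qfset" and Y :: "('b, 'q) qfset"
  assumes g: "qmap (PD Y) (PD X) g" and ua: "uadjoint (PD X) (PD Y) f g"
    and mus: "\<And>i. i \<in> I \<Longrightarrow> mus i \<in> PD_carrier Y" "\<And>i. i \<in> I \<Longrightarrow> fst (mus i) = q"
    and x: "x \<in> carr X"
  shows "snd (g (q, \<lambda>y. if y \<in> carr Y then SUP i\<in>I. snd (mus i) y else bot)) x
         = (SUP i\<in>I. snd (g (mus i)) x)"
proof -
  note D = uadjD[OF ua g]
  define J where "J = (q, \<lambda>y. if y \<in> carr Y then SUP i\<in>I. snd (mus i) y else bot)"
  define K where "K = (q, \<lambda>x. if x \<in> carr X then SUP i\<in>I. snd (g (mus i)) x else bot)"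
  have JC: "J \<in> PD_carrier Y" unfolding J_def by (rule join_carrier[OF mus])
  have KC: "K \<in> PD_carrier X" unfolding K_def using mus D(3,4) by (intro join_carrier) auto
  have gJ: "g J \<in> PD_carrier X" "fst (g J) = q" using D(3,4)[OF JC] J_def by auto
  have "uleq (PD Y) J (mus i)" if i: "i \<in> I" for i
    unfolding uleq_PD[OF mus(1)[OF i]] J_def using mus(2)[OF i] i by (auto intro: SUP_upper)
  then have "uleq (PD X) (g J) (g (mus i))" if i: "i \<in> I" for i using D(8) JC mus(1) i by blast
  then have le1: "snd (g (mus i)) x \<le> snd (g J) x" if i: "i \<in> I" for i
    using i x D(3)[OF mus(1)[OF i]] uleq_PD by blast
  have "uleq (PD X) K (g (mus i))" if i: "i \<in> I" for i
    unfolding uleq_PD[OF D(3)[OF mus(1)[OF i]]] K_def using mus(2)[OF i] i D(4)[OF mus(1)[OF i]]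
    by (auto intro: SUP_upper)
  then have "uleq (PD Y) (f K) (mus i)" if i: "i \<in> I" for i using D(9) KC mus(1) i by blast
  then have "uleq (PD Y) (f K) J"
    unfolding uleq_PD[OF JC] using D(2)[OF KC] J_def K_def mus
    by (auto simp: uleq_PD intro!: SUP_least)
  then have "uleq (PD X) (g (f K)) (g J)" using D(8) D(1)[OF KC] JC by blast
  then have "uleq (PD X) K (g J)" using uleq_PD_trans D(5)[OF KC] D(3)[OF D(1)[OF KC]] gJ(1) by blast
  then have le2: "snd (g J) x \<le> snd K x" using x gJ(1) uleq_PD by blast
  show ?thesis unfolding J_def[symmetric]
    using le1 le2 x K_def by (auto intro: order_antisym SUP_least)
qed



lemma iii_ii:
  fixes X :: "('a, 'q::unital_quantale) qfset" and Y :: "('b, 'q) qfset"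
  assumes Y: "qpreord Y" and g: "qmap (PD Y) (PD X) g" and ua: "uadjoint (PD X) (PD Y) f g"
    and sc: "\<forall>y\<in>carr Y. \<forall>q. \<forall>v\<in>DQ q (mem Y y).
               g (pd_scal Y (coyoneda Y y) q v) = pd_scal X (g (coyoneda Y y)) q v"
  shows "\<forall>l\<in>carr (PD Y). \<forall>q. \<forall>v\<in>DQ q (mem (PD Y) l). g (pd_scal Y l q v) = pd_scal X (g l) q v"
proof -
  note D = uadjD[OF ua g]
  define G where "G y = g (coyoneda Y y)" for y
  have GC: "G y \<in> PD_carrier X" "fst (G y) = mem Y y" if "y \<in> carr Y" for y
    unfolding G_def using D(3,4)[OF coyoneda_carrier[OF Y that]] by simp_all
  have E: "snd (g (pd_scal Y l q v)) x
      = (SUP y\<in>carr Y. rdiv (snd (G y) x) (mem Y y) * (rdiv (snd l y) (fst l) * v))"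
    if l: "l \<in> PD_carrier Y" and v: "v \<in> DQ q (fst l)" and x: "x \<in> carr X" for l q v x
  proof -
    define u where "u y = rdiv (snd l y) (fst l) * v" for y
    have u: "u y \<in> DQ q (mem Y y)" if "y \<in> carr Y" for y
      unfolding u_def by (rule DQ_comp[OF PDcD1[OF l that] v])
    have u': "u y = snd l y * ldiv (fst l) v" if "y \<in> carr Y" for y
      unfolding u_def using S1[of "snd l y" "fst l" v] DQ_D1[OF PDcD1[OF l that]] DQ_D2[OF v] by simp
    define mus where "mus y = pd_scal Y (coyoneda Y y) q (u y)" for y
    have musC: "mus y \<in> PD_carrier Y" "fst (mus y) = q" if "y \<in> carr Y" for y
      unfolding mus_def using pd_scal_carrier[OF coyoneda_carrier[OF Y that], of "u y" q] u[OF that]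
      by (simp_all add: pd_scal_simps)
    have eq: "pd_scal Y l q v = (q, \<lambda>x. if x \<in> carr Y then SUP y\<in>carr Y. snd (mus y) x else bot)"
    proof (rule PD_eq)
      show "pd_scal Y l q v \<in> PD_carrier Y" by (rule pd_scal_carrier[OF l v])
      show "(q, \<lambda>x. if x \<in> carr Y then SUP y\<in>carr Y. snd (mus y) x else bot) \<in> PD_carrier Y"
        using musC by (intro join_carrier) auto
      fix z assume z: "z \<in> carr Y"
      have "snd (pd_scal Y l q v) z = snd l z * ldiv (fst l) v" by (rule pd_scal_val[OF l v z])
      also have "\<dots> = (SUP y\<in>carr Y. rdiv (rel Y y z) (mem Y y) * snd l y) * ldiv (fst l) v"
        using PD_decomp[OF Y l z] by simp
      also have "\<dots> = (SUP y\<in>carr Y. rdiv (rel Y y z) (mem Y y) * snd l y * ldiv (fst l) v)"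
        by (rule mult_SUP_r)
      also have "\<dots> = (SUP y\<in>carr Y. snd (mus y) z)"
        by (rule SUP_cong) (simp_all add: mus_def pd_scal_simps z coyoneda_snd u' mult.assoc)
      finally show "snd (pd_scal Y l q v) z = snd (q, \<lambda>x. if x \<in> carr Y then SUP y\<in>carr Y. snd (mus y) x else bot) z"
        using z by simp
    qed (simp add: pd_scal_simps)
    have "snd (g (pd_scal Y l q v)) x = (SUP y\<in>carr Y. snd (g (mus y)) x)"
      unfolding eq by (rule join_pres[OF g ua musC x])
    also have "\<dots> = (SUP y\<in>carr Y. rdiv (snd (G y) x) (mem Y y) * u y)"
    proof (rule SUP_cong)
      fix y assume y: "y \<in> carr Y"
      have "g (mus y) = pd_scal X (G y) q (u y)" unfolding mus_def G_def using sc y u[OF y] by simp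
      then show "snd (g (mus y)) x = rdiv (snd (G y) x) (mem Y y) * u y"
        using x GC[OF y] by (simp add: pd_scal_simps)
    qed simp
    finally show ?thesis unfolding u_def .
  qed
  show ?thesis
  proof (intro ballI allI)
    fix l q v assume l: "l \<in> carr (PD Y)" and v: "v \<in> DQ q (mem (PD Y) l)"
    then have l: "l \<in> PD_carrier Y" and v: "v \<in> DQ q (fst l)" by auto
    define m where "m = fst l"
    have mm: "m \<in> DQ m (fst l)" unfolding m_def by (rule DQ_refl)
    have lm: "pd_scal Y l m m = l"
    proof (rule PD_eq[OF pd_scal_carrier[OF l mm] l])
      fix z assume z: "z \<in> carr Y"
      show "snd (pd_scal Y l m m) z = snd l z"
        using z DQ_D1[OF PDcD1[OF l z]] by (simp add: pd_scal_simps m_def)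
    qed (simp add: pd_scal_simps m_def)
    have gl: "snd (g l) x = (SUP y\<in>carr Y. rdiv (snd (G y) x) (mem Y y) * snd l y)"
      if x: "x \<in> carr X" for x
    proof -
      have "snd (g l) x = (SUP y\<in>carr Y. rdiv (snd (G y) x) (mem Y y) * (rdiv (snd l y) (fst l) * m))"
        using E[OF l mm x] lm by simp
      also have "\<dots> = (SUP y\<in>carr Y. rdiv (snd (G y) x) (mem Y y) * snd l y)"
        by (rule SUP_cong) (simp_all add: m_def DQ_D1[OF PDcD1[OF l]])
      finally show ?thesis .
    qed
    have glC: "g l \<in> PD_carrier X" "fst (g l) = m" using D(3,4)[OF l] m_def by simp_all
    have v': "v \<in> DQ q (fst (g l))" using v glC m_def by simp
    show "g (pd_scal Y l q v) = pd_scal X (g l) q v"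
    proof (rule PD_eq)
      show "g (pd_scal Y l q v) \<in> PD_carrier X" by (rule D(3)[OF pd_scal_carrier[OF l v]])
      show "pd_scal X (g l) q v \<in> PD_carrier X" by (rule pd_scal_carrier[OF glC(1) v'])
      show "fst (g (pd_scal Y l q v)) = fst (pd_scal X (g l) q v)"
        using D(4)[OF pd_scal_carrier[OF l v]] by (simp add: pd_scal_simps)
      fix x assume x: "x \<in> carr X"
      have "snd (pd_scal X (g l) q v) x = snd (g l) x * ldiv m v"
        using pd_scal_val[OF glC(1) v' x] glC by simp
      also have "\<dots> = (SUP y\<in>carr Y. rdiv (snd (G y) x) (mem Y y) * snd l y * ldiv m v)"
        unfolding gl[OF x] by (rule mult_SUP_r)
      also have "\<dots> = (SUP y\<in>carr Y. rdiv (snd (G y) x) (mem Y y) * (rdiv (snd l y) (fst l) * v))"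
      proof (rule SUP_cong)
        fix y assume y: "y \<in> carr Y"
        have "rdiv (snd l y) (fst l) * v = snd l y * ldiv m v"
          using S1[of "snd l y" "fst l" v] DQ_D1[OF PDcD1[OF l y]] DQ_D2[OF v] m_def by simp
        then show "rdiv (snd (G y) x) (mem Y y) * snd l y * ldiv m v
            = rdiv (snd (G y) x) (mem Y y) * (rdiv (snd l y) (fst l) * v)" by (simp add: mult.assoc)
      qed simp
      also have "\<dots> = snd (g (pd_scal Y l q v)) x" using E[OF l v x] by simp
      finally show "snd (g (pd_scal Y l q v)) x = snd (pd_scal X (g l) q v) x" by simp
    qed
  qed
qed

theorem proposition4p16:
  fixes X :: "('a, 'q::unital_quantale) qfset" and Y :: "('b, 'q) qfset"
    and g :: "'q \<times> ('b \<Rightarrow> 'q) \<Rightarrow> 'q \<times> ('a \<Rightarrow> 'q)"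
  assumes nontriv: "(bot::'q) < 1"
    and X: "qpreord X" and Y: "qpreord Y"
    and g: "qmap (PD Y) (PD X) g"
  shows "((\<exists>f. qmap (PD X) (PD Y) f \<and> qadjoint (PD X) (PD Y) f g)
           \<longleftrightarrow> ((\<exists>f. uadjoint (PD X) (PD Y) f g)
                \<and> (\<forall>l\<in>carr (PD Y). \<forall>q. \<forall>v\<in>DQ q (mem (PD Y) l).
                      g (pd_scal Y l q v) = pd_scal X (g l) q v)))
       \<and> (((\<exists>f. uadjoint (PD X) (PD Y) f g)
                \<and> (\<forall>l\<in>carr (PD Y). \<forall>q. \<forall>v\<in>DQ q (mem (PD Y) l).
                      g (pd_scal Y l q v) = pd_scal X (g l) q v))
           \<longleftrightarrow> ((\<exists>f. uadjoint (PD X) (PD Y) f g)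
                \<and> (\<forall>y\<in>carr Y. \<forall>q. \<forall>v\<in>DQ q (mem Y y).
                      g (pd_scal Y (coyoneda Y y) q v) = pd_scal X (g (coyoneda Y y)) q v)))"
proof -
  have A: "(\<exists>f. qmap (PD X) (PD Y) f \<and> qadjoint (PD X) (PD Y) f g)
           \<longleftrightarrow> ((\<exists>f. uadjoint (PD X) (PD Y) f g)
                \<and> (\<forall>l\<in>carr (PD Y). \<forall>q. \<forall>v\<in>DQ q (mem (PD Y) l).
                      g (pd_scal Y l q v) = pd_scal X (g l) q v))"
  proof
    assume "\<exists>f. qmap (PD X) (PD Y) f \<and> qadjoint (PD X) (PD Y) f g"
    then obtain f where f: "qmap (PD X) (PD Y) f" "qadjoint (PD X) (PD Y) f g" by blast
    show "(\<exists>f. uadjoint (PD X) (PD Y) f g)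
                \<and> (\<forall>l\<in>carr (PD Y). \<forall>q. \<forall>v\<in>DQ q (mem (PD Y) l).
                      g (pd_scal Y l q v) = pd_scal X (g l) q v)"
      using i_ii[OF g f] by blast
  next
    assume h: "(\<exists>f. uadjoint (PD X) (PD Y) f g)
                \<and> (\<forall>l\<in>carr (PD Y). \<forall>q. \<forall>v\<in>DQ q (mem (PD Y) l).
                      g (pd_scal Y l q v) = pd_scal X (g l) q v)"
    then obtain f where f: "uadjoint (PD X) (PD Y) f g" by blast
    show "\<exists>f. qmap (PD X) (PD Y) f \<and> qadjoint (PD X) (PD Y) f g"
      using ii_i[OF g f] h by blast
  qed
  have B: "((\<exists>f. uadjoint (PD X) (PD Y) f g)
                \<and> (\<forall>l\<in>carr (PD Y). \<forall>q. \<forall>v\<in>DQ q (mem (PD Y) l).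
                      g (pd_scal Y l q v) = pd_scal X (g l) q v))
           \<longleftrightarrow> ((\<exists>f. uadjoint (PD X) (PD Y) f g)
                \<and> (\<forall>y\<in>carr Y. \<forall>q. \<forall>v\<in>DQ q (mem Y y).
                      g (pd_scal Y (coyoneda Y y) q v) = pd_scal X (g (coyoneda Y y)) q v))"
  proof
    assume h: "(\<exists>f. uadjoint (PD X) (PD Y) f g)
                \<and> (\<forall>l\<in>carr (PD Y). \<forall>q. \<forall>v\<in>DQ q (mem (PD Y) l).
                      g (pd_scal Y l q v) = pd_scal X (g l) q v)"
    have "\<forall>y\<in>carr Y. \<forall>q. \<forall>v\<in>DQ q (mem Y y).
                      g (pd_scal Y (coyoneda Y y) q v) = pd_scal X (g (coyoneda Y y)) q v"
    proof (intro ballI allI)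
      fix y q v assume y: "y \<in> carr Y" and v: "v \<in> DQ q (mem Y y)"
      have "coyoneda Y y \<in> carr (PD Y)" using coyoneda_carrier[OF Y y] by simp
      then show "g (pd_scal Y (coyoneda Y y) q v) = pd_scal X (g (coyoneda Y y)) q v"
        using h v by simp
    qed
    then show "(\<exists>f. uadjoint (PD X) (PD Y) f g)
                \<and> (\<forall>y\<in>carr Y. \<forall>q. \<forall>v\<in>DQ q (mem Y y).
                      g (pd_scal Y (coyoneda Y y) q v) = pd_scal X (g (coyoneda Y y)) q v)"
      using h by blast
  next
    assume h: "(\<exists>f. uadjoint (PD X) (PD Y) f g)
                \<and> (\<forall>y\<in>carr Y. \<forall>q. \<forall>v\<in>DQ q (mem Y y).
                      g (pd_scal Y (coyoneda Y y) q v) = pd_scal X (g (coyoneda Y y)) q v)"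
    then obtain f where f: "uadjoint (PD X) (PD Y) f g" by blast
    show "(\<exists>f. uadjoint (PD X) (PD Y) f g)
                \<and> (\<forall>l\<in>carr (PD Y). \<forall>q. \<forall>v\<in>DQ q (mem (PD Y) l).
                      g (pd_scal Y l q v) = pd_scal X (g l) q v)"
      using iii_ii[OF Y g f] h f by blast
  qed
  show ?thesis using A B by blast
qed

end
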